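(* Assume the setting described in the context, and let $m=l+(k-1)d\in\{1,\dots,d(p+q)\}$ with $k\in\{1,\dots,p+q\}$ and $l\in\{1,\dots,d\}$. For every $z\in B(1,\delta_0)$ there exist $x_1^\pm(z),\dots,x_{p+q}^\pm(z)\in\mathbb C$ such that $$L_m^\pm(z)=\begin{pmatrix}x_1^\pm(z)\mathbf l_l^\pm\\ \vdots\\ x_{p+q}^\pm(z)\mathbf l_l^\pm\end{pmatrix},$$ and moreover $x_1^\pm(z)=\lambda_{l,q}^\pm\,(\zeta_m^\pm)'(z)$ for all $z\in B(1,\delta_0)$.
   Context: Let $d,p,q\ge1$. Let $\mathbf r_1^\pm,\dots,\mathbf r_d^\pm$ be a basis of $\mathbb C^d$ (eigenvectors of $df(u^\pm)$), $\mathbf P^\pm=(\mathbf r_1^\pm|\dots|\mathbf r_d^\pm)$ and $(\mathbf l_1^\pm|\dots|\mathbf l_d^\pm)^T=(\mathbf P^\pm)^{-1}$. Let $A_k^\pm\in\mathcal M_d(\mathbb C)$, $k=-p,\dots,q$, satisfy $(\mathbf P^\pm)^{-1}A_k^\pm\mathbf P^\pm=\mathrm{diag}(\lambda_{1,k}^\pm,\dots,\lambda_{d,k}^\pm)$, with $A^\pm_{-p},A^\pm_q$ invertible, and let $\mathcal F_l^\pm(\kappa)=\sum_{k=-p}^q\lambda_{l,k}^\pm\kappa^k$. Assume $\mathcal F_l^\pm(1)=1$ and that $\mathcal F_l^\pm(\kappa)=1$ has $p+q$ distinct nonzero roots for each $l$. Let $\delta_0>0$ be such that for each $l$ these roots extend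 to holomorphic functions $\zeta_{l+(k-1)d}^\pm$, $k=1,\dots,p+q$, on $B(1,\delta_0)$ with $\mathcal F_l^\pm(\zeta_{l+(k-1)d}^\pm(z))=z$ and the $\zeta^\pm_{l+(k-1)d}(z)$, $k=1,\dots,p+q$, pairwise distinct for each $z$. Define $R_m^\pm(z)=(\zeta_m^\pm(z)^{q-1}\mathbf r_l^\pm,\dots,\zeta_m^\pm(z)^{-p}\mathbf r_l^\pm)^T\in\mathbb C^{d(p+q)}$ for $m=l+(k-1)d$, $N^{\pm,\infty}(z)=(R_1^\pm(z)|\dots|R^\pm_{d(p+q)}(z))$ (invertible), and $L_1^\pm(z),\dots,L_{d(p+q)}^\pm(z)$ by $(L_1^\pm(z)|\dots|L_{d(p+q)}^\pm(z))^T=N^{\pm,\infty}(z)^{-1}$ (the dual basis). *)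

theory Defs
  imports "HOL-Analysis.Analysis" "Jordan_Normal_Form.Matrix"
begin

definition symF :: "nat \<Rightarrow> nat \<Rightarrow> (nat \<Rightarrow> int \<Rightarrow> complex) \<Rightarrow> nat \<Rightarrow> complex \<Rightarrow> complex" where
  "symF p q lam l \<kappa> = (\<Sum>k\<in>{- int p..int q}. lam l k * power_int \<kappa> k)"

text \<open>The matrix N^infinity(z) of size d(p+q): column m (0-based, m = l + k d with l < d)
  is R_m(z) = (zeta_m^(q-1) r_l, ..., zeta_m^(-p) r_l); its row index j*d+i (j < p+q, i < d)
  carries zeta_m(z)^(q-1-j) times the i-th entry of r_l = column l of P.\<close>
definition Ninf :: "nat \<Rightarrow> nat \<Rightarrow> nat \<Rightarrow> complex mat \<Rightarrow> (nat \<Rightarrow> complex \<Rightarrow> complex) \<Rightarrow> complex \<Rightarrow> complex mat" where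
  "Ninf d p q P \<zeta> z = mat (d * (p + q)) (d * (p + q))
     (\<lambda>(a, b). power_int (\<zeta> b z) (int q - 1 - int (a div d)) * P $$ (a mod d, b mod d))"

end

theory Submission imports Defs "HOL-Computational_Algebra.Polynomial" begin

lemma sum_split_blocks:
  fixes f :: "nat \<Rightarrow> 'a::comm_monoid_add"
  shows "sum f {..<d * N} = (\<Sum>j<N. \<Sum>i<d. f (j * d + i))"
proof (induction N)
  case 0 then show ?case by simp
next
  case (Suc N)
  have "{..<d * Suc N} = {..<d * N} \<union> {d*N..<d*N + d}" by auto
  moreover have "sum f ({..<d * N} \<union> {d*N..<d*N + d}) = sum f {..<d * N} + sum f {d*N..<d*N + d}"
    by (rule sum.union_disjoint) auto
  ultimately have "sum f {..<d * Suc N} = sum f {..<d * N} + sum f {d*N..<d*N + d}"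
    by simp
  also have "sum f {d*N..<d*N + d} = (\<Sum>i<d. f (N * d + i))"
  proof -
    have "sum f {d*N..<d*N + d} = sum (\<lambda>i. f (i + d*N)) {0..<d}"
      using sum.shift_bounds_nat_ivl[of f 0 "d*N" d] by (simp add: add.commute)
    then show ?thesis by (simp add: lessThan_atLeast0 mult.commute add.commute)
  qed
  finally show ?case using Suc by simp
qed

lemma laurent_division:
  fixes lam :: "int \<Rightarrow> complex" and p q :: nat and \<zeta> z :: complex
  assumes q1: "q \<ge> 1" and z0: "\<zeta> \<noteq> 0"
    and F: "(\<Sum>n\<in>{- int p..int q}. lam n * power_int \<zeta> n) = z"
  shows "\<exists>g. g 0 = lam (int q) \<and> (\<forall>\<kappa>. \<kappa> \<noteq> 0 \<longrightarrow>
     (\<kappa> - \<zeta>) * (\<Sum>j<p+q. g j * power_int \<kappa> (int q - 1 - int j))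
       = (\<Sum>n\<in>{- int p..int q}. lam n * power_int \<kappa> n) - z)"
proof -
  define Q where "Q = (\<Sum>n\<in>{- int p..int q}. monom (lam n) (nat (n + int p))) - monom z p"
  have polyQ: "poly Q \<kappa> = \<kappa> ^ p * ((\<Sum>n\<in>{- int p..int q}. lam n * power_int \<kappa> n) - z)"
    if "\<kappa> \<noteq> 0" for \<kappa>
  proof -
    have e: "\<kappa> ^ nat (n + int p) = \<kappa> ^ p * power_int \<kappa> n" if "n \<in> {- int p..int q}" for n
    proof -
      have i: "int (nat (n + int p)) = n + int p" using that by simp
      have "\<kappa> ^ nat (n + int p) = power_int \<kappa> (int (nat (n + int p)))"
        by (rule power_int_of_nat[symmetric])
      also have "\<dots> = power_int \<kappa> (n + int p)" by (simp only: i)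
      also have "\<dots> = power_int \<kappa> n * power_int \<kappa> (int p)"
        using \<open>\<kappa> \<noteq> 0\<close> by (simp add: power_int_add)
      finally show ?thesis by (simp add: power_int_of_nat mult.commute)
    qed
    have s: "(\<Sum>x\<in>{- int p..int q}. lam x * \<kappa> ^ nat (x + int p)) =
       (\<Sum>x\<in>{- int p..int q}. lam x * (\<kappa> ^ p * power_int \<kappa> x))"
      by (rule sum.cong) (simp_all add: e)
    show ?thesis unfolding Q_def
      by (simp add: poly_sum poly_monom s sum_distrib_left right_diff_distrib mult.assoc
          mult.left_commute)
  qed
  have "poly Q \<zeta> = 0" using polyQ[OF z0] F by simp
  then obtain R where QR: "Q = [:-\<zeta>, 1:] * R" using poly_eq_0_iff_dvd by (metis dvdE)
  have degQ: "degree Q \<le> p + q"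
    unfolding Q_def
    by (rule order.trans[OF degree_diff_le_max], rule max.boundedI,
        rule degree_sum_le, simp, rule order.trans[OF degree_monom_le], auto,
        rule order.trans[OF degree_monom_le], simp)
  have cQ: "coeff Q (p + q) = lam (int q)"
  proof -
    have "coeff Q (p+q) = (\<Sum>n\<in>{- int p..int q}. if nat (n + int p) = p + q then lam n else 0)"
      unfolding Q_def using q1 by (simp add: coeff_sum coeff_monom)
    also have "\<dots> = (\<Sum>n\<in>{- int p..int q}. if n = int q then lam n else 0)"
      by (rule sum.cong) auto
    also have "\<dots> = lam (int q)" by simp
    finally show ?thesis .
  qed
  have degR: "degree R < p + q"
  proof (cases "R = 0")
    case True then show ?thesis using q1 by simp
  next
    case False
    then have "degree Q = 1 + degree R" unfolding QR by (subst degree_mult_eq) auto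
    then show ?thesis using degQ by simp
  qed
  have cR: "coeff R (p + q - 1) = lam (int q)"
  proof -
    have "coeff R (p+q) = 0" using degR by (simp add: coeff_eq_0)
    moreover have "coeff Q (Suc (p + q - 1)) = - \<zeta> * coeff R (Suc (p+q-1)) + coeff R (p+q-1)"
      unfolding QR by simp
    ultimately show ?thesis using cQ q1 by simp
  qed
  have polyR: "poly R \<kappa> = (\<Sum>i<p+q. coeff R i * \<kappa> ^ i)" for \<kappa>
    unfolding poly_altdef
    by (rule sum.mono_neutral_left) (use degR in \<open>auto simp: coeff_eq_0\<close>)
  define g where "g j = coeff R (p + q - 1 - j)" for j
  show ?thesis
  proof (intro exI conjI allI impI)
    show "g 0 = lam (int q)" using cR by (simp add: g_def)
    fix \<kappa> :: complex assume k0: "\<kappa> \<noteq> 0"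
    have "(\<Sum>j<p+q. g j * power_int \<kappa> (int q - 1 - int j)) * \<kappa> ^ p
        = (\<Sum>j<p+q. coeff R (p + q - Suc j) * \<kappa> ^ (p + q - Suc j))"
      unfolding sum_distrib_right
    proof (rule sum.cong, simp)
      fix j assume j: "j \<in> {..<p+q}"
      have "power_int \<kappa> (int q - 1 - int j) * \<kappa> ^ p = power_int \<kappa> (int q - 1 - int j) * power_int \<kappa> (int p)"
        by (simp add: power_int_of_nat)
      also have "\<dots> = power_int \<kappa> (int q - 1 - int j + int p)" using k0 by (simp add: power_int_add)
      also have "int q - 1 - int j + int p = int (p + q - Suc j)" using j by auto
      also have "power_int \<kappa> (int (p + q - Suc j)) = \<kappa> ^ (p + q - Suc j)" by (simp add: power_int_of_nat)
      finally show "g j * power_int \<kappa> (int q - 1 - int j) * \<kappa> ^ p = coeff R (p + q - Suc j) * \<kappa> ^ (p + q - Suc j)"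
        by (simp add: g_def mult.assoc)
    qed
    also have "\<dots> = poly R \<kappa>" unfolding polyR by (rule sum.nat_diff_reindex)
    finally have G: "(\<Sum>j<p+q. g j * power_int \<kappa> (int q - 1 - int j)) * \<kappa> ^ p = poly R \<kappa>" .
    have "\<kappa> ^ p * ((\<kappa> - \<zeta>) * (\<Sum>j<p+q. g j * power_int \<kappa> (int q - 1 - int j))) = poly Q \<kappa>"
      using G unfolding QR by (simp add: algebra_simps)
    then have "\<kappa> ^ p * ((\<kappa> - \<zeta>) * (\<Sum>j<p+q. g j * power_int \<kappa> (int q - 1 - int j)))
       = \<kappa> ^ p * ((\<Sum>n\<in>{- int p..int q}. lam n * power_int \<kappa> n) - z)"
      using polyQ[OF k0] by simp
    then show "(\<kappa> - \<zeta>) * (\<Sum>j<p+q. g j * power_int \<kappa> (int q - 1 - int j))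
       = (\<Sum>n\<in>{- int p..int q}. lam n * power_int \<kappa> n) - z"
      using k0 by simp
  qed
qed

theorem lemma4p2:
  fixes d p q :: nat and P Pinv :: "complex mat" and A :: "int \<Rightarrow> complex mat"
    and lam :: "nat \<Rightarrow> int \<Rightarrow> complex" and \<zeta> :: "nat \<Rightarrow> complex \<Rightarrow> complex"
    and \<delta>0 :: real and Ninv :: "complex \<Rightarrow> complex mat" and l k :: nat
  assumes "d \<ge> 1" "p \<ge> 1" "q \<ge> 1"
    and "P \<in> carrier_mat d d" "Pinv \<in> carrier_mat d d"
    and "Pinv * P = 1\<^sub>m d" "P * Pinv = 1\<^sub>m d"
    and "\<forall>j\<in>{- int p..int q}. A j \<in> carrier_mat d d \<and>
           Pinv * A j * P = mat d d (\<lambda>(a, b). if a = b then lam a j else 0)"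
    and "invertible_mat (A (- int p))" "invertible_mat (A (int q))"
    and "\<forall>l'<d. symF p q lam l' 1 = 1"
    and "\<forall>l'<d. finite {\<kappa>. \<kappa> \<noteq> 0 \<and> symF p q lam l' \<kappa> = 1} \<and>
                card {\<kappa>. \<kappa> \<noteq> 0 \<and> symF p q lam l' \<kappa> = 1} = p + q"
    and "\<delta>0 > 0"
    and "\<forall>m<d * (p + q). \<zeta> m holomorphic_on ball 1 \<delta>0"
    and "\<forall>m<d * (p + q). \<forall>w\<in>ball 1 \<delta>0. \<zeta> m w \<noteq> 0 \<and> symF p q lam (m mod d) (\<zeta> m w) = w"
    and "\<forall>l'<d. \<forall>w\<in>ball 1 \<delta>0. inj_on (\<lambda>k'. \<zeta> (l' + k' * d) w) {..<p + q}"
    and "\<forall>w\<in>ball 1 \<delta>0. Ninv w \<in> carrier_mat (d * (p + q)) (d * (p + q)) \<and>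
           Ninv w * Ninf d p q P \<zeta> w = 1\<^sub>m (d * (p + q)) \<and>
           Ninf d p q P \<zeta> w * Ninv w = 1\<^sub>m (d * (p + q))"
    and "l < d" "k < p + q"
  shows "\<forall>z\<in>ball 1 \<delta>0. \<exists>x :: nat \<Rightarrow> complex.
           (\<forall>j<p + q. \<forall>i<d. Ninv z $$ (l + k * d, j * d + i) = x j * Pinv $$ (l, i)) \<and>
           x 0 = lam l (int q) * deriv (\<zeta> (l + k * d)) z"
  proof
  fix z :: complex assume zB: "z \<in> ball 1 \<delta>0"
  define m where "m = l + k * d"
  define n where "n = d * (p + q)"
  have mn: "m < n"
  proof -
    have "l + k * d < d + k * d" using assms(18) by simp
    also have "\<dots> = (Suc k) * d" by simp
    also have "\<dots> \<le> (p + q) * d" using assms(19) by (intro mult_right_mono) auto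
    finally show ?thesis by (simp add: m_def n_def mult.commute)
  qed
  have mmod: "m mod d = l" using assms(18) by (simp add: m_def)
  define \<zeta>0 where "\<zeta>0 = \<zeta> m z"
  have z0: "\<zeta>0 \<noteq> 0" and Fz0: "symF p q lam l \<zeta>0 = z"
    using assms(15) mn zB mmod by (auto simp: \<zeta>0_def n_def)
  obtain g where g0: "g 0 = lam l (int q)" and gid: "\<And>\<kappa>. \<kappa> \<noteq> 0 \<Longrightarrow>
     (\<kappa> - \<zeta>0) * (\<Sum>j<p+q. g j * power_int \<kappa> (int q - 1 - int j))
       = (\<Sum>r\<in>{- int p..int q}. lam l r * power_int \<kappa> r) - z"
    using laurent_division[OF assms(3) z0, where lam="lam l" and z=z] Fz0 unfolding symF_def by blast
  define G where "G \<kappa> = (\<Sum>j<p+q. g j * power_int \<kappa> (int q - 1 - int j))" for \<kappa>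
  have Gid: "(\<kappa> - \<zeta>0) * G \<kappa> = symF p q lam l \<kappa> - z" if "\<kappa> \<noteq> 0" for \<kappa>
    using gid[OF that] unfolding G_def symF_def by simp
  define D where "D = deriv (\<zeta> m) z"
  have hol: "\<zeta> m holomorphic_on ball 1 \<delta>0" using assms(14) mn by (simp add: n_def)
  have nzb: "\<forall>w\<in>ball 1 \<delta>0. \<zeta> m w \<noteq> 0" using assms(15) mn by (simp add: n_def)
  have DZ: "(\<zeta> m has_field_derivative D) (at z)"
    unfolding D_def by (rule holomorphic_derivI[OF hol open_ball zB])
  have holG: "(\<lambda>w. G (\<zeta> m w)) holomorphic_on ball 1 \<delta>0"
    unfolding G_def
    by (intro holomorphic_intros holomorphic_on_power_int hol) (use nzb in auto)
  have DG: "((\<lambda>w. G (\<zeta> m w)) has_field_derivative deriv (\<lambda>w. G (\<zeta> m w)) z) (at z)"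
    by (rule holomorphic_derivI[OF holG open_ball zB])
  have Dprod: "((\<lambda>w. (\<zeta> m w - \<zeta>0) * G (\<zeta> m w)) has_field_derivative
       D * G (\<zeta> m z) + deriv (\<lambda>w. G (\<zeta> m w)) z * (\<zeta> m z - \<zeta>0)) (at z)"
    using DERIV_mult[OF DERIV_diff[OF DZ DERIV_const] DG] by simp
  then have Dprod': "((\<lambda>w. (\<zeta> m w - \<zeta>0) * G (\<zeta> m w)) has_field_derivative D * G \<zeta>0) (at z)"
    by (simp add: \<zeta>0_def)
  have eqf: "(\<zeta> m w - \<zeta>0) * G (\<zeta> m w) = w - z" if "w \<in> ball 1 \<delta>0" for w
    using Gid[of "\<zeta> m w"] assms(15) mn that mmod by (auto simp: n_def)
  have "((\<lambda>w. w - z) has_field_derivative D * G \<zeta>0) (at z)"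
    by (rule has_field_derivative_transform_within_open[OF Dprod' open_ball zB eqf])
  moreover have "((\<lambda>w. w - z) has_field_derivative 1) (at z)"
    by (auto intro!: derivative_eq_intros)
  ultimately have DG1: "D * G \<zeta>0 = 1" by (rule DERIV_unique)
  define N where "N = Ninf d p q P \<zeta> z"
  define NI where "NI = Ninv z"
  have NIc: "NI \<in> carrier_mat n n" and NNI: "N * NI = 1\<^sub>m n"
    using assms(17) zB by (auto simp: NI_def N_def n_def)
  have Nc: "N \<in> carrier_mat n n" by (simp add: N_def Ninf_def n_def)
  have Nidx: "N $$ (a, b) = power_int (\<zeta> b z) (int q - 1 - int (a div d)) * P $$ (a mod d, b mod d)"
    if "a < n" "b < n" for a b
    using that by (simp add: N_def Ninf_def n_def)
  have d0: "d > 0" using assms(1) by simp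
  have PP: "(\<Sum>i<d. Pinv $$ (l, i) * P $$ (i, l')) = (if l = l' then 1 else 0)" if "l' < d" for l'
  proof -
    have "(Pinv * P) $$ (l, l') = (\<Sum>i<d. Pinv $$ (l, i) * P $$ (i, l'))"
      using assms(4,5,18) that by (simp add: scalar_prod_def lessThan_atLeast0)
    then show ?thesis using assms(6,18) that by simp
  qed
  define y where "y a = g (a div d) * Pinv $$ (l, a mod d)" for a
  have claim1: "(\<Sum>a<n. y a * N $$ (a, b)) = (if b = m then G \<zeta>0 else 0)" if bn: "b < n" for b
  proof -
    have bd: "b mod d < d" using d0 by simp
    have "(\<Sum>a<n. y a * N $$ (a, b)) = (\<Sum>j<p+q. \<Sum>i<d. y (j*d+i) * N $$ (j*d+i, b))"
      unfolding n_def by (rule sum_split_blocks)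
    also have "\<dots> = (\<Sum>j<p+q. g j * power_int (\<zeta> b z) (int q - 1 - int j) *
                       (\<Sum>i<d. Pinv $$ (l, i) * P $$ (i, b mod d)))"
    proof (rule sum.cong[OF refl])
      fix j assume j: "j \<in> {..<p+q}"
      show "(\<Sum>i<d. y (j*d+i) * N $$ (j*d+i, b)) = g j * power_int (\<zeta> b z) (int q - 1 - int j) *
                       (\<Sum>i<d. Pinv $$ (l, i) * P $$ (i, b mod d))"
        unfolding sum_distrib_left
      proof (rule sum.cong[OF refl])
        fix i assume i: "i \<in> {..<d}"
        have a: "j * d + i < n"
        proof -
          have "j * d + i < j * d + d" using i by simp
          also have "\<dots> = Suc j * d" by simp
          also have "\<dots> \<le> (p + q) * d" using j by (intro mult_right_mono) auto
          finally show ?thesis by (simp add: n_def mult.commute)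
        qed
        have dv: "(j * d + i) div d = j" "(j * d + i) mod d = i" using i by auto
        show "y (j*d+i) * N $$ (j*d+i, b) = g j * power_int (\<zeta> b z) (int q - 1 - int j) *
                (Pinv $$ (l, i) * P $$ (i, b mod d))"
          unfolding Nidx[OF a bn] y_def dv by (simp add: ac_simps)
      qed
    qed
    also have "\<dots> = (if l = b mod d then G (\<zeta> b z) else 0)"
      unfolding PP[OF bd] G_def by simp
    also have "\<dots> = (if b = m then G \<zeta>0 else 0)"
    proof (cases "b mod d = l")
      case False
      then have "b \<noteq> m" using mmod by auto
      then show ?thesis using False by auto
    next
      case True
      show ?thesis
      proof (cases "b = m")
        case True then show ?thesis using mmod by (simp add: \<zeta>0_def)
      next
        case False
        define k' where "k' = b div d"
        have bk: "b = l + k' * d" using True by (simp add: k'_def) (metis div_mult_mod_eq add.commute)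
        have k'lt: "k' < p + q" using bn d0 by (simp add: k'_def n_def less_mult_imp_div_less mult.commute)
        have "k' \<noteq> k" using False bk by (auto simp: m_def)
        then have ne: "\<zeta> b z \<noteq> \<zeta>0"
          using assms(16) assms(18) zB k'lt assms(19) unfolding \<zeta>0_def m_def bk
          by (auto simp: inj_on_def)
        have bz: "\<zeta> b z \<noteq> 0" "symF p q lam l (\<zeta> b z) = z"
          using assms(15) bn zB True by (auto simp: n_def)
        have "(\<zeta> b z - \<zeta>0) * G (\<zeta> b z) = 0" using Gid[OF bz(1)] bz(2) by simp
        then have "G (\<zeta> b z) = 0" using ne by simp
        then show ?thesis using True False by simp
      qed
    qed
    finally show ?thesis .
  qed
  have claim2: "y a = G \<zeta>0 * NI $$ (m, a)" if an: "a < n" for a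
  proof -
    have "y a = (\<Sum>c<n. y c * (N * NI) $$ (c, a))"
      using an by (simp add: NNI if_distrib cong: if_cong)
    also have "\<dots> = (\<Sum>c<n. \<Sum>b<n. y c * N $$ (c, b) * NI $$ (b, a))"
      using Nc NIc an by (simp add: scalar_prod_def lessThan_atLeast0 sum_distrib_left mult.assoc)
    also have "\<dots> = (\<Sum>b<n. (\<Sum>c<n. y c * N $$ (c, b)) * NI $$ (b, a))"
      by (subst sum.swap) (simp add: sum_distrib_right)
    also have "\<dots> = (\<Sum>b<n. (if b = m then G \<zeta>0 else 0) * NI $$ (b, a))"
      by (rule sum.cong) (simp_all add: claim1)
    also have "\<dots> = (\<Sum>b<n. if b = m then G \<zeta>0 * NI $$ (b, a) else 0)"
      by (rule sum.cong) auto
    also have "\<dots> = G \<zeta>0 * NI $$ (m, a)" using mn by simp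
    finally show ?thesis .
  qed
  show "\<exists>x :: nat \<Rightarrow> complex.
           (\<forall>j<p + q. \<forall>i<d. Ninv z $$ (l + k * d, j * d + i) = x j * Pinv $$ (l, i)) \<and>
           x 0 = lam l (int q) * deriv (\<zeta> (l + k * d)) z"
  proof (intro exI conjI allI impI)
    fix j i assume j: "j < p + q" and i: "i < d"
    have a: "j * d + i < n"
    proof -
      have "j * d + i < j * d + d" using i by simp
      also have "\<dots> = Suc j * d" by simp
      also have "\<dots> \<le> (p + q) * d" using j by (intro mult_right_mono) auto
      finally show ?thesis by (simp add: n_def mult.commute)
    qed
    have dv: "(j * d + i) div d = j" "(j * d + i) mod d = i" using i by auto
    have "NI $$ (m, j*d+i) = D * (G \<zeta>0 * NI $$ (m, j*d+i))" using DG1 by (simp add: mult.assoc[symmetric])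
    also have "\<dots> = D * y (j*d+i)" using claim2[OF a] by simp
    finally show "Ninv z $$ (l + k * d, j * d + i) = (\<lambda>j. D * g j) j * Pinv $$ (l, i)"
      using i by (simp add: NI_def m_def y_def dv mult.assoc)
  next
    show "(\<lambda>j. D * g j) 0 = lam l (int q) * deriv (\<zeta> (l + k * d)) z"
      using g0 by (simp add: D_def m_def mult.commute)
  qed
qed

end
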